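(* For every $k\ge1$ there is $c>0$ such that the following holds. For every $n>k$ and every weighted $k$-uniform hypergraph $w$ with vertex set $[n]$ such that $w([n])=0$, $$\mathbb{E}_{A,x,y}|w(A\cup\{x\})-w(A\cup\{y\})|\ge c\,n^{-k}\|w\|_1,$$ where the expectation is over a $(k-1)$-set $A\subseteq[n]$ and distinct vertices $x,y\notin A$ chosen uniformly at random.
   Context: $[n]=\{1,\dots,n\}$; a weighted $k$-uniform hypergraph on $[n]$ is a function $w$ from the $k$-subsets of $[n]$ to $\mathbb{R}$; $w([n])=\sum_e w(e)$ and $\|w\|_1=\sum_e|w(e)|$. *)

theory Defs
  imports "HOL-Analysis.Analysis"
begin

definition ksets :: "nat \<Rightarrow> nat \<Rightarrow> nat set set" where
  "ksets n k = {e. e \<subseteq> {1..n} \<and> card e = k}"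

text \<open>A weighted k-uniform hypergraph on [n] is represented by w :: nat set => real,
  of which only the values on ksets n k matter.\<close>
definition total_weight :: "nat \<Rightarrow> nat \<Rightarrow> (nat set \<Rightarrow> real) \<Rightarrow> real" where
  "total_weight n k w = (\<Sum>e\<in>ksets n k. w e)"

definition norm1 :: "nat \<Rightarrow> nat \<Rightarrow> (nat set \<Rightarrow> real) \<Rightarrow> real" where
  "norm1 n k w = (\<Sum>e\<in>ksets n k. \<bar>w e\<bar>)"

definition triples :: "nat \<Rightarrow> nat \<Rightarrow> (nat set \<times> nat \<times> nat) set" where
  "triples n k = {(A, x, y). A \<in> ksets n (k - 1) \<and> x \<in> {1..n} \<and> y \<in> {1..n}
                     \<and> x \<notin> A \<and> y \<notin> A \<and> x \<noteq> y}"

definition exp_diff :: "nat \<Rightarrow> nat \<Rightarrow> (nat set \<Rightarrow> real) \<Rightarrow> real" where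
  "exp_diff n k w = (\<Sum>(A, x, y)\<in>triples n k. \<bar>w (insert x A) - w (insert y A)\<bar>)
                       / real (card (triples n k))"

end

theory Submission
  imports Defs
begin

lemma sum_fiber_bound:
  fixes F :: "'b \<Rightarrow> real"
  assumes "finite X" "finite Y" "\<phi> ` X \<subseteq> Y"
    "\<And>y. y\<in>Y \<Longrightarrow> card {x\<in>X. \<phi> x = y} \<le> M" "\<And>y. y \<in> Y \<Longrightarrow> F y \<ge> 0"
  shows "(\<Sum>x\<in>X. F (\<phi> x)) \<le> real M * (\<Sum>y\<in>Y. F y)"
proof -
  have "(\<Sum>x\<in>X. F (\<phi> x)) = (\<Sum>y\<in>Y. \<Sum>x\<in>{x\<in>X. \<phi> x = y}. F (\<phi> x))"
    using sum.group[OF assms(1,2,3), of "\<lambda>x. F (\<phi> x)"] by simp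
  also have "\<dots> = (\<Sum>y\<in>Y. real (card {x\<in>X. \<phi> x = y}) * F y)"
    by (rule sum.cong) auto
  also have "\<dots> \<le> (\<Sum>y\<in>Y. real M * F y)"
    by (rule sum_mono, rule mult_right_mono) (use assms(4,5) in auto)
  finally show ?thesis by (simp add: sum_distrib_left)
qed

lemma card_le_image:
  assumes "finite U" "A \<subseteq> \<psi> ` U"
  shows "card A \<le> card U"
  using assms by (meson card_image_le card_mono finite_imageI le_trans)

lemma finite_ksets: "finite (ksets n k)"
  unfolding ksets_def by (rule finite_subset[of _ "Pow {1..n}"]) auto

lemma finite_triples: "finite (triples n k)"
  unfolding triples_def
  by (rule finite_subset[of _ "ksets n (k-1) \<times> {1..n} \<times> {1..n}"]) (auto simp: finite_ksets)

lemma ksets_finite_card: "e \<in> ksets n k \<Longrightarrow> finite e \<and> card e = k \<and> e \<subseteq> {1..n}"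
  unfolding ksets_def by (auto intro: finite_subset)

lemma card_diff_sym: "e \<in> ksets n k \<Longrightarrow> f \<in> ksets n k \<Longrightarrow> card (e - f) = card (f - e)"
  by (metis card_le_sym_Diff ksets_finite_card le_antisym order_refl)

lemma card_subsets_le: "card {Z. Z \<subseteq> {1..n::nat} \<and> card Z = m} \<le> n ^ m"
proof -
  have eq: "card {Z. Z \<subseteq> {1..n::nat} \<and> card Z = m} = n choose m"
    using n_subsets[of "{1..n}" m] by simp
  show ?thesis
  proof (cases "m \<le> n")
    case True thus ?thesis using eq binomial_le_pow[OF True] by simp
  next
    case False hence "n < m" by simp thus ?thesis unfolding eq by (simp add: binomial_eq_0)
  qed
qed

definition pairs :: "nat \<Rightarrow> nat \<Rightarrow> nat \<Rightarrow> (nat set \<times> nat set) set" where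
  "pairs n k j = {(e,f). e \<in> ksets n k \<and> f \<in> ksets n k \<and> card (e - f) = j}"

definition PP :: "nat \<Rightarrow> nat \<Rightarrow> (nat set \<Rightarrow> real) \<Rightarrow> nat \<Rightarrow> real" where
  "PP n k w j = (\<Sum>p\<in>pairs n k j. \<bar>w (fst p) - w (snd p)\<bar>)"

definition SS :: "nat \<Rightarrow> nat \<Rightarrow> (nat set \<Rightarrow> real) \<Rightarrow> real" where
  "SS n k w = (\<Sum>t\<in>triples n k. \<bar>w (insert (fst (snd t)) (fst t)) - w (insert (snd (snd t)) (fst t))\<bar>)"

definition XX :: "nat \<Rightarrow> nat \<Rightarrow> nat \<Rightarrow> ((nat set \<times> nat set) \<times> (nat \<times> nat)) set" where
  "XX n k j = Sigma (pairs n k j) (\<lambda>p. (fst p - snd p) \<times> (snd p - fst p))"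

definition gn :: "nat set \<times> nat set \<Rightarrow> nat \<times> nat \<Rightarrow> nat set" where
  "gn p q = insert (snd q) (fst p - {fst q})"

lemma finite_pairs: "finite (pairs n k j)"
  unfolding pairs_def
  by (rule finite_subset[of _ "ksets n k \<times> ksets n k"]) (auto simp: finite_ksets)

lemma finite_XX: "finite (XX n k j)"
  unfolding XX_def using finite_pairs
  by (auto intro!: finite_SigmaI dest: ksets_finite_card simp: pairs_def)

lemma PP_nonneg: "PP n k w j \<ge> 0"
  unfolding PP_def by (rule sum_nonneg) auto

lemma gn_in:
  assumes "(p,q) \<in> XX n k (Suc m)"
  shows "gn p q \<in> ksets n k" "card (gn p q - snd p) = m"
    "insert (fst q) (fst p - {fst q}) = fst p" "fst p - {fst q} \<in> ksets n (k-1)"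
proof -
  obtain e f x y where pq: "p = (e,f)" "q = (x,y)" by (cases p, cases q) auto
  have e: "finite e" "card e = k" "e \<subseteq> {1..n}" and f: "finite f" "card f = k" "f \<subseteq> {1..n}"
    and c: "card (e - f) = Suc m" and x: "x \<in> e" "x \<notin> f" and y: "y \<in> f" "y \<notin> e"
    using assms pq ksets_finite_card[of e n k] ksets_finite_card[of f n k]
    by (auto simp: XX_def pairs_def)
  have g: "gn p q = insert y (e - {x})" using pq by (simp add: gn_def)
  have ce: "card (e - {x}) = k - 1" using e x by simp
  have k: "k \<ge> 1" using e x by (metis card_0_eq empty_iff less_one not_le)
  show "gn p q \<in> ksets n k" unfolding g ksets_def using e f y ce k by auto
  have "gn p q - snd p = (e - f) - {x}" using g pq y by auto
  thus "card (gn p q - snd p) = m" using c x e by simp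
  show "insert (fst q) (fst p - {fst q}) = fst p" using pq x by auto
  show "fst p - {fst q} \<in> ksets n (k-1)" using pq e ce unfolding ksets_def by auto
qed

lemma term2:
  assumes "k \<ge> 1"
  shows "(\<Sum>(p,q)\<in>XX n k (Suc m). \<bar>w (gn p q) - w (snd p)\<bar>) \<le> real (k*n) * PP n k w m"
proof -
  let ?\<phi> = "\<lambda>(p,q). (gn p q, snd p)"
  have "(\<Sum>(p,q)\<in>XX n k (Suc m). \<bar>w (gn p q) - w (snd p)\<bar>)
      = (\<Sum>z\<in>XX n k (Suc m). (\<lambda>r. \<bar>w (fst r) - w (snd r)\<bar>) (?\<phi> z))"
    by (rule sum.cong) auto
  also have "\<dots> \<le> real (k*n) * (\<Sum>r\<in>pairs n k m. \<bar>w (fst r) - w (snd r)\<bar>)"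
  proof (rule sum_fiber_bound[OF finite_XX finite_pairs])
    show "?\<phi> ` XX n k (Suc m) \<subseteq> pairs n k m"
    proof
      fix r assume "r \<in> ?\<phi> ` XX n k (Suc m)"
      then obtain p q where pq: "(p,q) \<in> XX n k (Suc m)" "r = (gn p q, snd p)" by auto
      have "snd p \<in> ksets n k" using pq(1) by (auto simp: XX_def pairs_def)
      thus "r \<in> pairs n k m" using gn_in[OF pq(1)] pq(2) by (auto simp: pairs_def)
    qed
  next
    fix r assume r: "r \<in> pairs n k m"
    obtain g f where gf: "r = (g,f)" by (cases r) auto
    have gk: "g \<in> ksets n k" using r gf by (auto simp: pairs_def)
    let ?\<psi> = "\<lambda>(y,x). ((insert x (g - {y}), f), (x,y))"
    have "{z \<in> XX n k (Suc m). ?\<phi> z = r} \<subseteq> ?\<psi> ` (g \<times> {1..n})"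
    proof
      fix z assume z: "z \<in> {z \<in> XX n k (Suc m). ?\<phi> z = r}"
      obtain e f' x y where zz: "z = ((e,f'),(x,y))" by (cases z) auto
      have zx: "((e,f'),(x,y)) \<in> XX n k (Suc m)" and "gn (e,f') (x,y) = g" "f' = f"
        using z zz gf by auto
      hence gg: "g = insert y (e - {x})" and xe: "x \<in> e" "x \<notin> f" and ye: "y \<in> f" "y \<notin> e"
        and ek: "e \<in> ksets n k"
        by (auto simp: gn_def XX_def pairs_def)
      have "e = insert x (g - {y})" using gg xe ye by auto
      moreover have "x \<in> {1..n}" using ek xe ksets_finite_card by blast
      moreover have "y \<in> g" using gg by auto
      ultimately show "z \<in> ?\<psi> ` (g \<times> {1..n})" using zz \<open>f' = f\<close> by force
    qed
    hence "card {z \<in> XX n k (Suc m). ?\<phi> z = r} \<le> card (g \<times> {1..n})"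
      by (rule card_le_image[rotated]) (use gk ksets_finite_card in auto)
    also have "\<dots> = k * n" using gk ksets_finite_card by (simp add: card_cartesian_product)
    finally show "card {z \<in> XX n k (Suc m). ?\<phi> z = r} \<le> k * n" .
  qed auto
  finally show ?thesis by (simp add: PP_def)
qed


lemma term1:
  assumes "k \<ge> 1"
  shows "(\<Sum>(p,q)\<in>XX n k (Suc m). \<bar>w (fst p) - w (gn p q)\<bar>) \<le> real (2^k * n^m) * SS n k w"
proof -
  let ?\<phi> = "\<lambda>(p,q). (fst p - {fst q}, fst q, snd q)"
  let ?F = "\<lambda>t. \<bar>w (insert (fst (snd t)) (fst t)) - w (insert (snd (snd t)) (fst t))\<bar>"
  have "(\<Sum>(p,q)\<in>XX n k (Suc m). \<bar>w (fst p) - w (gn p q)\<bar>)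
      = (\<Sum>z\<in>XX n k (Suc m). ?F (?\<phi> z))"
  proof (rule sum.cong)
    fix z assume z: "z \<in> XX n k (Suc m)"
    obtain p q where zz: "z = (p,q)" by (cases z) auto
    show "(case z of (p,q) \<Rightarrow> \<bar>w (fst p) - w (gn p q)\<bar>) = ?F (?\<phi> z)"
      using gn_in(3)[of p q] z zz by (simp add: gn_def)
  qed simp
  also have "\<dots> \<le> real (2^k * n^m) * SS n k w"
    unfolding SS_def
  proof (rule sum_fiber_bound[OF finite_XX finite_triples])
    show "?\<phi> ` XX n k (Suc m) \<subseteq> triples n k"
    proof
      fix r assume "r \<in> ?\<phi> ` XX n k (Suc m)"
      then obtain p q where pq: "(p,q) \<in> XX n k (Suc m)" "r = ?\<phi> (p,q)" by auto
      obtain e f x y where pq2: "p = (e,f)" "q = (x,y)" by (cases p, cases q) auto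
      have ek: "e \<in> ksets n k" and f: "f \<in> ksets n k" and x: "x \<in> e" "x \<notin> f" and y: "y \<in> f" "y \<notin> e"
        using pq pq2 by (auto simp: XX_def pairs_def)
      have "x \<in> {1..n}" "y \<in> {1..n}" using ek f x y ksets_finite_card by blast+
      thus "r \<in> triples n k" using gn_in(4)[OF pq(1)] pq pq2 x y
        unfolding triples_def by auto
    qed
  next
    fix r assume r: "r \<in> triples n k"
    obtain A x y where rr: "r = (A,x,y)" by (cases r) auto
    have Ak: "A \<in> ksets n (k-1)" using r rr by (simp add: triples_def)
    have Af: "finite A" "card A = k - 1" using Ak ksets_finite_card by blast+
    let ?\<psi> = "\<lambda>(U,Z). ((insert x A, U \<union> insert y Z), (x,y))"
    have "{z \<in> XX n k (Suc m). ?\<phi> z = r} \<subseteq> ?\<psi> ` (Pow A \<times> {Z. Z \<subseteq> {1..n} \<and> card Z = m})"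
    proof
      fix z assume z: "z \<in> {z \<in> XX n k (Suc m). ?\<phi> z = r}"
      obtain e f x' y' where zz: "z = ((e,f),(x',y'))" by (cases z) auto
      have zx: "((e,f),(x',y')) \<in> XX n k (Suc m)" and eq: "e - {x'} = A" "x' = x" "y' = y"
        using z zz rr by auto
      hence xe: "x \<in> e" "x \<notin> f" and ye: "y \<in> f" "y \<notin> e"
        and ek: "e \<in> ksets n k" and fk: "f \<in> ksets n k" and c: "card (e - f) = Suc m"
        by (auto simp: XX_def pairs_def)
      have e: "e = insert x A" using eq xe by auto
      have c2: "card (f - e) = Suc m" using c card_diff_sym[OF ek fk] by simp
      have ff: "finite f" "f \<subseteq> {1..n}" using fk ksets_finite_card by blast+
      have "f = (f \<inter> A) \<union> insert y ((f - e) - {y})" using e xe ye by auto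
      moreover have "(f - e) - {y} \<subseteq> {1..n}" using ff by auto
      moreover have "card ((f - e) - {y}) = m" using c2 ye ff by simp
      ultimately show "z \<in> ?\<psi> ` (Pow A \<times> {Z. Z \<subseteq> {1..n} \<and> card Z = m})"
        using zz eq e by (intro image_eqI[where x = "(f \<inter> A, (f - e) - {y})"]) auto
    qed
    hence "card {z \<in> XX n k (Suc m). ?\<phi> z = r} \<le> card (Pow A \<times> {Z. Z \<subseteq> {1..n} \<and> card Z = m})"
      by (rule card_le_image[rotated]) (use Af in auto)
    also have "\<dots> = 2^(k-1) * card {Z. Z \<subseteq> {1..n} \<and> card Z = m}"
      using Af by (simp add: card_cartesian_product card_Pow)
    also have "\<dots> \<le> 2^k * n^m"
      by (rule mult_le_mono[OF _ card_subsets_le]) simp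
    finally show "card {z \<in> XX n k (Suc m). ?\<phi> z = r} \<le> 2^k * n^m" .
  qed auto
  finally show ?thesis .
qed


lemma recursion:
  assumes "k \<ge> 1"
  shows "PP n k w (Suc m) \<le> real (2^k * n^m) * SS n k w + real (k*n) * PP n k w m"
proof -
  let ?D = "\<lambda>p. \<bar>w (fst p) - w (snd p)\<bar>"
  let ?G = "\<lambda>p q. \<bar>w (fst p) - w (gn p q)\<bar> + \<bar>w (gn p q) - w (snd p)\<bar>"
  have "PP n k w (Suc m) \<le> (\<Sum>p\<in>pairs n k (Suc m). \<Sum>q\<in>(fst p - snd p) \<times> (snd p - fst p). ?G p q)"
    unfolding PP_def
  proof (rule sum_mono)
    fix p assume p: "p \<in> pairs n k (Suc m)"
    obtain e f where pp: "p = (e,f)" by (cases p) auto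
    have ek: "e \<in> ksets n k" and fk: "f \<in> ksets n k" and c: "card (e - f) = Suc m"
      using p pp by (auto simp: pairs_def)
    have c2: "card (f - e) = Suc m" using c card_diff_sym[OF ek fk] by simp
    have fin: "finite ((fst p - snd p) \<times> (snd p - fst p))"
      using ek fk ksets_finite_card pp by auto
    have ne: "(fst p - snd p) \<times> (snd p - fst p) \<noteq> {}"
      using c c2 pp by (metis card.empty fst_conv nat.distinct(1) snd_conv Sigma_empty1 Sigma_empty2 times_eq_iff)
    obtain q0 where q0: "q0 \<in> (fst p - snd p) \<times> (snd p - fst p)" using ne by blast
    have "?D p \<le> ?G p q0" by simp
    also have "\<dots> \<le> (\<Sum>q\<in>(fst p - snd p) \<times> (snd p - fst p). ?G p q)"
      by (rule member_le_sum[OF q0 _ fin]) simp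
    finally show "?D p \<le> (\<Sum>q\<in>(fst p - snd p) \<times> (snd p - fst p). ?G p q)" .
  qed
  also have "\<dots> = (\<Sum>(p,q)\<in>XX n k (Suc m). ?G p q)"
    unfolding XX_def
    by (rule sum.Sigma) (use finite_pairs ksets_finite_card in \<open>auto simp: pairs_def\<close>)
  also have "\<dots> = (\<Sum>(p,q)\<in>XX n k (Suc m). \<bar>w (fst p) - w (gn p q)\<bar>)
      + (\<Sum>(p,q)\<in>XX n k (Suc m). \<bar>w (gn p q) - w (snd p)\<bar>)"
    by (simp add: sum.distrib split_def)
  also have "\<dots> \<le> real (2^k * n^m) * SS n k w + real (k*n) * PP n k w m"
    using term1[OF assms] term2[OF assms] by (rule add_mono)
  finally show ?thesis .
qed


lemma PP_0: "PP n k w 0 = 0"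
  unfolding PP_def
proof (rule sum.neutral, rule ballI)
  fix p assume p: "p \<in> pairs n k 0"
  obtain e f where pp: "p = (e,f)" by (cases p) auto
  have ek: "e \<in> ksets n k" and fk: "f \<in> ksets n k" and c: "card (e - f) = 0"
    using p pp by (auto simp: pairs_def)
  have fe: "finite e" "finite f" "card e = card f" using ek fk ksets_finite_card by auto
  have "e \<subseteq> f" using c fe by auto
  hence "e = f" using fe card_subset_eq by blast
  thus "\<bar>w (fst p) - w (snd p)\<bar> = 0" using pp by simp
qed

lemma SS_nonneg: "SS n k w \<ge> 0"
  unfolding SS_def by (rule sum_nonneg) auto

lemma PP_bound:
  assumes "k \<ge> 1" "n \<ge> 1"
  shows "PP n k w (Suc m) \<le> (2^k + real k)^(Suc m) * real n ^ m * SS n k w"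
proof (induction m)
  case 0
  have "(2::real)^k * SS n k w \<le> (2^k + real k) * SS n k w"
    using SS_nonneg[of n k w] by (intro mult_right_mono) auto
  thus ?case using recursion[OF assms(1), of n w 0] PP_0[of n k w] by simp
next
  case (Suc m)
  define B where "B = (2^k + real k :: real)"
  have "(1::real) \<le> 2^k" by simp
  hence "B \<ge> 1" unfolding B_def by linarith
  hence B1: "B ^ Suc m \<ge> 1" by (rule one_le_power)
  have S0: "SS n k w \<ge> 0" by (rule SS_nonneg)
  have "PP n k w (Suc (Suc m)) \<le> real (2^k * n^Suc m) * SS n k w + real (k*n) * PP n k w (Suc m)"
    by (rule recursion[OF assms(1)])
  also have "\<dots> \<le> real (2^k * n^Suc m) * SS n k w + real (k*n) * (B^(Suc m) * real n ^ m * SS n k w)"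
    using Suc.IH unfolding B_def by (intro add_left_mono mult_left_mono) auto
  also have "\<dots> = (2^k + real k * B^(Suc m)) * (real n ^ Suc m * SS n k w)"
    by (simp add: algebra_simps)
  also have "\<dots> \<le> (B^(Suc m) * 2^k + real k * B^(Suc m)) * (real n ^ Suc m * SS n k w)"
    using B1 S0 by (intro mult_right_mono add_right_mono) auto
  also have "\<dots> = B^(Suc (Suc m)) * real n ^ Suc m * SS n k w"
    unfolding B_def by (simp add: algebra_simps)
  finally show ?case unfolding B_def .
qed

lemma total_bound:
  assumes "k \<ge> 1" "n \<ge> 1"
  shows "(\<Sum>p\<in>ksets n k \<times> ksets n k. \<bar>w (fst p) - w (snd p)\<bar>)
     \<le> real (k+1) * ((2^k + real k)^k * real n ^ (k-1) * SS n k w)"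
proof -
  define B where "B = (2^k + real k :: real)"
  have "(1::real) \<le> 2^k" by simp
  hence B1: "B \<ge> 1" unfolding B_def by linarith
  have S0: "SS n k w \<ge> 0" by (rule SS_nonneg)
  have fin: "finite (ksets n k \<times> ksets n k)" by (simp add: finite_ksets)
  have img: "(\<lambda>p. card (fst p - snd p)) ` (ksets n k \<times> ksets n k) \<subseteq> {..k}"
    using ksets_finite_card by (auto intro!: le_trans[OF card_mono[OF _ Diff_subset]])
  have "(\<Sum>p\<in>ksets n k \<times> ksets n k. \<bar>w (fst p) - w (snd p)\<bar>) = (\<Sum>j\<in>{..k}. PP n k w j)"
  proof -
    have e: "\<And>j. {x \<in> ksets n k \<times> ksets n k. card (fst x - snd x) = j} = pairs n k j"
      by (auto simp: pairs_def)
    show ?thesis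
      using sum.group[OF fin _ img, of "\<lambda>p. \<bar>w (fst p) - w (snd p)\<bar>", symmetric]
      unfolding e by (simp add: PP_def)
  qed
  also have "\<dots> \<le> (\<Sum>j\<in>{..k}. B^k * real n ^ (k-1) * SS n k w)"
  proof (rule sum_mono)
    fix j assume j: "j \<in> {..k}"
    show "PP n k w j \<le> B^k * real n ^ (k-1) * SS n k w"
    proof (cases j)
      case 0 thus ?thesis using PP_0[of n k w] S0 B1 by simp
    next
      case (Suc m)
      have "PP n k w j \<le> B^(Suc m) * real n ^ m * SS n k w"
        using PP_bound[OF assms, of w m] Suc unfolding B_def by simp
      also have "\<dots> \<le> B^k * real n ^ (k-1) * SS n k w"
        using j Suc B1 assms S0
        by (intro mult_right_mono mult_mono power_increasing) auto
      finally show ?thesis .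
    qed
  qed
  also have "\<dots> = real (k+1) * (B^k * real n ^ (k-1) * SS n k w)" by simp
  finally show ?thesis unfolding B_def .
qed


lemma norm_bound:
  assumes "total_weight n k w = 0"
  shows "real (card (ksets n k)) * norm1 n k w \<le> (\<Sum>p\<in>ksets n k \<times> ksets n k. \<bar>w (fst p) - w (snd p)\<bar>)"
proof -
  have "real (card (ksets n k)) * norm1 n k w = (\<Sum>e\<in>ksets n k. \<bar>\<Sum>f\<in>ksets n k. (w e - w f)\<bar>)"
  proof -
    have "\<And>e. (\<Sum>f\<in>ksets n k. (w e - w f)) = real (card (ksets n k)) * w e"
      using assms by (simp add: sum_subtractf total_weight_def)
    thus ?thesis by (simp add: norm1_def sum_distrib_left abs_mult)
  qed
  also have "\<dots> \<le> (\<Sum>e\<in>ksets n k. \<Sum>f\<in>ksets n k. \<bar>w e - w f\<bar>)"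
    by (rule sum_mono) (rule sum_abs)
  also have "\<dots> = (\<Sum>p\<in>ksets n k \<times> ksets n k. \<bar>w (fst p) - w (snd p)\<bar>)"
    by (simp add: sum.cartesian_product split_def)
  finally show ?thesis .
qed

lemma card_triples:
  assumes "k \<ge> 1"
  shows "card (triples n k) \<le> card (ksets n k) * k * n"
proof -
  let ?h = "\<lambda>(A,x,y). (insert x A, x, y)"
  have "inj_on ?h (triples n k)"
  proof (rule inj_onI)
    fix a b assume a: "a \<in> triples n k" and b: "b \<in> triples n k" and h: "?h a = ?h b"
    obtain A x y where aa: "a = (A,x,y)" by (cases a) auto
    obtain A' x' y' where bb: "b = (A',x',y')" by (cases b) auto
    have "x = x'" "y = y'" "insert x A = insert x' A'" "x \<notin> A" "x' \<notin> A'"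
      using a b h aa bb by (auto simp: triples_def)
    hence "A = A'" by (metis Diff_insert_absorb)
    thus "a = b" using aa bb \<open>x = x'\<close> \<open>y = y'\<close> by simp
  qed
  moreover have "?h ` triples n k \<subseteq> Sigma (ksets n k) (\<lambda>e. e \<times> {1..n})"
  proof
    fix z assume "z \<in> ?h ` triples n k"
    then obtain A x y where t: "(A,x,y) \<in> triples n k" "z = (insert x A, x, y)" by auto
    have A: "finite A" "card A = k - 1" "A \<subseteq> {1..n}" and x: "x \<in> {1..n}" "x \<notin> A" and y: "y \<in> {1..n}"
      using t ksets_finite_card[of A n "k-1"] by (auto simp: triples_def)
    have "insert x A \<in> ksets n k" unfolding ksets_def using A x assms by auto
    thus "z \<in> Sigma (ksets n k) (\<lambda>e. e \<times> {1..n})" using t y by auto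
  qed
  moreover have "finite (Sigma (ksets n k) (\<lambda>e. e \<times> {1..n}))"
    using finite_ksets ksets_finite_card by (auto intro!: finite_SigmaI)
  ultimately have "card (triples n k) \<le> card (Sigma (ksets n k) (\<lambda>e. e \<times> {1..n}))"
    by (intro card_inj_on_le)
  also have "\<dots> = (\<Sum>e\<in>ksets n k. card (e \<times> {1..n}))"
    using finite_ksets ksets_finite_card by (intro card_SigmaI) auto
  also have "\<dots> = (\<Sum>e\<in>ksets n k. k * n)"
    using ksets_finite_card by (intro sum.cong) (auto simp: card_cartesian_product)
  finally show ?thesis by simp
qed

lemma SS_eq: "(\<Sum>(A, x, y)\<in>triples n k. \<bar>w (insert x A) - w (insert y A)\<bar>) = SS n k w"
  unfolding SS_def by (rule sum.cong) auto


theorem proposition3p3: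
  fixes k :: nat
  assumes "k \<ge> 1"
  shows "\<exists>c>0. \<forall>n>k. \<forall>w :: nat set \<Rightarrow> real.
           total_weight n k w = 0 \<longrightarrow>
           exp_diff n k w \<ge> c * real n powr (- real k) * norm1 n k w"
proof -
  define B where "B = (2^k + real k :: real)"
  have "(1::real) \<le> 2^k" by simp
  hence B1: "B \<ge> 1" unfolding B_def by linarith
  define c where "c = 1 / (real k * real (k+1) * B^k)"
  have Bk: "B^k > 0" using B1 by simp
  have cpos: "c > 0" unfolding c_def using assms Bk by simp
  show ?thesis
  proof (intro exI[of _ c] conjI cpos allI impI)
    fix n :: nat and w :: "nat set \<Rightarrow> real"
    assume n: "n > k" and tw: "total_weight n k w = 0"
    have n1: "n \<ge> 1" using n assms by simp
    define N where "N = card (ksets n k)"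
    have "{1..k} \<in> ksets n k" unfolding ksets_def using n by auto
    hence Npos: "N > 0" unfolding N_def using finite_ksets card_gt_0_iff by blast
    define S where "S = SS n k w"
    define T where "T = card (triples n k)"
    have S0: "S \<ge> 0" unfolding S_def by (rule SS_nonneg)
    have H1: "real N * norm1 n k w \<le> real (k+1) * (B^k * real n ^ (k-1) * S)"
      using norm_bound[OF tw] total_bound[OF assms n1, of w] unfolding N_def S_def B_def by linarith
    have ed: "exp_diff n k w = S / real T"
      unfolding exp_diff_def S_def T_def using SS_eq by simp
    have pw: "real n powr (- real k) = 1 / real n ^ k"
      using n1 by (simp add: powr_minus powr_realpow divide_inverse)
    have nk: "real n ^ k = real n * real n ^ (k-1)" using assms by (metis Suc_diff_le diff_Suc_1 power_Suc)
    have "c * real n powr (- real k) * norm1 n k w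
        = (real N * norm1 n k w) / (real k * real (k+1) * B^k * real n ^ k * real N)"
    proof -
      have "c * real n powr (- real k) * norm1 n k w = norm1 n k w / (real k * real (k+1) * B^k * real n ^ k)"
        unfolding c_def pw by (simp add: divide_inverse mult_ac)
      also have "\<dots> = (norm1 n k w * real N) / ((real k * real (k+1) * B^k * real n ^ k) * real N)"
        using Npos by (intro nonzero_mult_divide_mult_cancel_right[symmetric]) simp
      finally show ?thesis by (simp add: mult_ac)
    qed
    also have "\<dots> \<le> (real (k+1) * (B^k * real n ^ (k-1) * S)) / (real k * real (k+1) * B^k * real n ^ k * real N)"
      using H1 Npos Bk assms n1 by (intro divide_right_mono) auto
    also have "\<dots> = S / (real k * real n * real N)"
    proof -
      let ?q = "real (k+1) * B^k * real n^(k-1)"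
      have q: "?q \<noteq> 0" using B1 n1 by simp
      have e1: "real k * real (k+1) * B^k * real n ^ k * real N = ?q * (real k * real n * real N)"
        unfolding nk by (simp add: mult_ac)
      have e2: "real (k+1) * (B^k * real n ^ (k-1) * S) = ?q * S" by (simp add: mult_ac)
      show ?thesis unfolding e1 e2 using q by (rule nonzero_mult_divide_mult_cancel_left)
    qed
    also have "\<dots> \<le> S / real T"
    proof (cases "T = 0")
      case True
      hence "triples n k = {}" unfolding T_def using finite_triples by simp
      hence "S = 0" unfolding S_def SS_def by simp
      thus ?thesis by simp
    next
      case False
      have "T \<le> N * k * n" unfolding T_def N_def by (rule card_triples[OF assms])
      hence "real T \<le> real k * real n * real N" by (simp add: mult_ac of_nat_mult[symmetric] del: of_nat_mult)
      thus ?thesis using False S0 by (intro divide_left_mono) auto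
    qed
    finally show "c * real n powr (- real k) * norm1 n k w \<le> exp_diff n k w" unfolding ed .
  qed
qed

end
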